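(* Let $X$ be a real Banach space with the Ball Small Combination of Slice Property ($BSCSP$). Then for every separable closed subspace $Y$ of $X$ there exists a separable closed subspace $Z$ of $X$ with $Y\subseteq Z$ such that $Z$ has $BSCSP$.
   Context: For a real Banach space $X$, $B_X$ denotes its closed unit ball and $X^*$ its dual. A slice of a bounded set $C\subseteq X$ is a set $S(C,x^*,\alpha)=\{x\in C: x^*(x)>\sup x^*(C)-\alpha\}$ with $x^*\in X^*$, $\|x^*\|=1$, $\alpha>0$. A convex combination of slices of $C$ is a set $\sum_{i=1}^k \lambda_i S_i=\{\sum_{i=1}^k\lambda_i x_i : x_i\in S_i\}$ where $S_1,\dots,S_k$ are slices of $C$ and $\lambda_i>0$ with $\sum_i\lambda_i=1$. $X$ has the Ball Small Combination of Slice Property ($BSCSP$) if for every $\varepsilon>0$ there is a convex combination of slices of $B_X$ of diameter less than $\varepsilon$. *)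

theory Defs
  imports "HOL-Analysis.Analysis"
begin

definition unit_ball_in :: "'a::real_normed_vector set \<Rightarrow> 'a set" where
  "unit_ball_in Z = {x \<in> Z. norm x \<le> 1}"

text \<open>Bounded (continuous) linear functionals on the subspace Z, i.e. elements of Z^*
  (represented by their values on Z).\<close>
definition dual_on :: "'a::real_normed_vector set \<Rightarrow> ('a \<Rightarrow> real) \<Rightarrow> bool" where
  "dual_on Z f \<longleftrightarrow>
     (\<forall>x\<in>Z. \<forall>y\<in>Z. f (x + y) = f x + f y) \<and>
     (\<forall>c. \<forall>x\<in>Z. f (c *\<^sub>R x) = c * f x) \<and>
     (\<exists>K. \<forall>x\<in>Z. \<bar>f x\<bar> \<le> K * norm x)"

definition fnorm_on :: "'a::real_normed_vector set \<Rightarrow> ('a \<Rightarrow> real) \<Rightarrow> real" where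
  "fnorm_on Z f = Sup ((\<lambda>x. \<bar>f x\<bar>) ` unit_ball_in Z)"

definition slice :: "'a set \<Rightarrow> ('a \<Rightarrow> real) \<Rightarrow> real \<Rightarrow> 'a set" where
  "slice C f \<alpha> = {x \<in> C. f x > Sup (f ` C) - \<alpha>}"

definition is_ball_slice :: "'a::real_normed_vector set \<Rightarrow> 'a set \<Rightarrow> bool" where
  "is_ball_slice Z S \<longleftrightarrow>
     (\<exists>f \<alpha>. dual_on Z f \<and> fnorm_on Z f = 1 \<and> \<alpha> > 0 \<and> S = slice (unit_ball_in Z) f \<alpha>)"

definition BSCSP_on :: "'a::real_normed_vector set \<Rightarrow> bool" where
  "BSCSP_on Z \<longleftrightarrow>
     (\<forall>\<epsilon>>0. \<exists>(k::nat) (S::nat \<Rightarrow> 'a set) (w::nat \<Rightarrow> real).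
        (\<forall>i<k. is_ball_slice Z (S i)) \<and> (\<forall>i<k. w i > 0) \<and> (\<Sum>i<k. w i) = 1 \<and>
        diameter {\<Sum>i<k. w i *\<^sub>R x i | x. \<forall>i<k. x i \<in> S i} < \<epsilon>)"

end

theory Submission
  imports Defs
begin

lemma closure_subspaceI:
  fixes R :: "'a::real_normed_vector set"
  assumes z: "0 \<in> R" and add: "\<And>x y. x \<in> R \<Longrightarrow> y \<in> R \<Longrightarrow> x + y \<in> R"
    and sc: "\<And>q x. q \<in> \<rat> \<Longrightarrow> x \<in> R \<Longrightarrow> q *\<^sub>R x \<in> R"
  shows "subspace (closure R)"
  unfolding subspace_def
proof (intro conjI ballI allI)
  show "0 \<in> closure R" using z closure_subset by blast
next
  fix x y assume x: "x \<in> closure R" and y: "y \<in> closure R"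
  have 1: "(\<lambda>v. r + v) ` closure R \<subseteq> closure R" if r: "r \<in> R" for r
    by (rule image_closure_subset) (auto intro!: continuous_intros add r closure_subset[THEN subsetD])
  have "(\<lambda>v. v + y) ` closure R \<subseteq> closure R"
    by (rule image_closure_subset) (use 1 y in \<open>auto intro!: continuous_intros simp: add.commute\<close>)
  then show "x + y \<in> closure R" using x by blast
next
  fix c :: real and x assume x: "x \<in> closure R"
  have 1: "(\<lambda>v. q *\<^sub>R v) ` closure R \<subseteq> closure R" if "q \<in> \<rat>" for q
    by (rule image_closure_subset) (auto intro!: continuous_intros sc that closure_subset[THEN subsetD])
  have cl: "closed {c. c *\<^sub>R x \<in> closure R}"
    using continuous_closed_vimage[of "closure R" "\<lambda>c. c *\<^sub>R x"]
    by (auto simp: vimage_def intro!: continuous_intros)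
  have "\<rat> \<subseteq> {c. c *\<^sub>R x \<in> closure R}" using 1 x by blast
  then have "closure \<rat> \<subseteq> {c. c *\<^sub>R x \<in> closure R}" using cl closure_minimal by blast
  then show "c *\<^sub>R x \<in> closure R" using Rats_closure_real by auto
qed

definition rspan :: "'a::real_normed_vector set \<Rightarrow> 'a set" where
  "rspan A = (\<lambda>l. sum_list (map (\<lambda>(q,a). of_rat q *\<^sub>R a) l)) ` lists (UNIV \<times> A)"

lemma rspan_countable: "countable A \<Longrightarrow> countable (rspan A)"
  unfolding rspan_def by (intro countable_image countable_lists) auto

lemma rspan_scale: fixes l :: "(rat \<times> 'a::real_vector) list" shows "sum_list (map (\<lambda>(q,a). of_rat q *\<^sub>R a) (map (\<lambda>(q',a). (r*q', a)) l))
   = of_rat r *\<^sub>R sum_list (map (\<lambda>(q,a). of_rat q *\<^sub>R a) l)"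
  by (induction l) (auto simp: scaleR_add_right of_rat_mult o_def)

lemma closure_rspan_subspace: "subspace (closure (rspan A))"
proof (rule closure_subspaceI)
  show "0 \<in> rspan A" unfolding rspan_def by (rule image_eqI[of _ _ "[]"]) auto
next
  fix x y assume "x \<in> rspan A" "y \<in> rspan A"
  then obtain l m where "l \<in> lists (UNIV \<times> A)" "m \<in> lists (UNIV \<times> A)"
    "x = sum_list (map (\<lambda>(q,a). of_rat q *\<^sub>R a) l)" "y = sum_list (map (\<lambda>(q,a). of_rat q *\<^sub>R a) m)"
    unfolding rspan_def by auto
  then show "x + y \<in> rspan A" unfolding rspan_def
    by (intro image_eqI[of _ _ "l @ m"]) auto
next
  fix q :: real and x assume "q \<in> \<rat>" "x \<in> rspan A"
  then obtain r l where "q = of_rat r" "l \<in> lists (UNIV \<times> A)"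
    "x = sum_list (map (\<lambda>(q,a). of_rat q *\<^sub>R a) l)"
    unfolding rspan_def Rats_def by auto
  then show "q *\<^sub>R x \<in> rspan A" unfolding rspan_def
    by (intro image_eqI[of _ _ "map (\<lambda>(q',a). (r*q', a)) l"]) (use rspan_scale[of r l] in auto)
qed

lemma subset_rspan: "A \<subseteq> rspan A"
proof
  fix a assume "a \<in> A" then show "a \<in> rspan A" unfolding rspan_def
    by (intro image_eqI[of _ _ "[(1,a)]"]) auto
qed

lemma rspan_subset_span: "rspan A \<subseteq> span A"
proof
  fix x assume "x \<in> rspan A"
  then obtain l where l: "l \<in> lists (UNIV \<times> A)" "x = sum_list (map (\<lambda>(q,a). of_rat q *\<^sub>R a) l)"
    unfolding rspan_def by auto
  have "sum_list (map (\<lambda>(q,a). of_rat q *\<^sub>R a) l) \<in> span A" using l(1)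
    by (induction l) (auto simp: span_base span_zero span_add span_scale)
  then show "x \<in> span A" using l by simp
qed

lemma separable_closure_span:
  fixes C :: "'a::real_normed_vector set"
  assumes "countable C"
  shows "separable_space (top_of_set (closure (span C)))"
proof -
  have "span C \<subseteq> closure (rspan C)"
    using span_minimal[OF subset_trans[OF subset_rspan closure_subset] closure_rspan_subspace] .
  then have 1: "closure (span C) \<subseteq> closure (rspan C)"
    by (simp add: closure_minimal)
  have 2: "rspan C \<subseteq> closure (span C)" using rspan_subset_span closure_subset by blast
  show ?thesis unfolding separable_space_def
    apply (rule exI[of _ "rspan C"])
    using 1 2 rspan_countable[OF assms] by (auto simp: closure_of_subtopology Int_absorb2 Int_absorb1)
qed

lemma dual_on_neg: "dual_on Z f \<Longrightarrow> x \<in> Z \<Longrightarrow> f (- x) = - f x"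
  unfolding dual_on_def by (metis mult_minus1 scaleR_minus1_left)

lemma zero_ball: "subspace Z \<Longrightarrow> 0 \<in> unit_ball_in Z"
  by (simp add: unit_ball_in_def subspace_0)

lemma neg_ball: "subspace Z \<Longrightarrow> x \<in> unit_ball_in Z \<Longrightarrow> - x \<in> unit_ball_in Z"
  by (simp add: unit_ball_in_def subspace_neg)

lemma bdd_abs:
  assumes "dual_on Z f"
  shows "bdd_above ((\<lambda>x. \<bar>f x\<bar>) ` unit_ball_in Z)"
proof -
  obtain K where K: "\<forall>x\<in>Z. \<bar>f x\<bar> \<le> K * norm x" using assms unfolding dual_on_def by blast
  have "\<bar>f x\<bar> \<le> \<bar>K\<bar>" if "x \<in> unit_ball_in Z" for x
  proof -
    have "\<bar>f x\<bar> \<le> K * norm x" using K that unfolding unit_ball_in_def by auto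
    also have "\<dots> \<le> \<bar>K\<bar> * norm x" by (simp add: mult_right_mono)
    also have "\<dots> \<le> \<bar>K\<bar>" using that unfolding unit_ball_in_def by (simp add: mult_left_le)
    finally show ?thesis .
  qed
  then show ?thesis by (intro bdd_aboveI2[where M="\<bar>K\<bar>"]) auto
qed

lemma fn_upper:
  assumes "dual_on Z f" "x \<in> unit_ball_in Z"
  shows "\<bar>f x\<bar> \<le> fnorm_on Z f"
  unfolding fnorm_on_def using bdd_abs[OF assms(1)] assms(2) by (auto intro: cSup_upper)

lemma bdd_f:
  assumes "dual_on Z f"
  shows "bdd_above (f ` unit_ball_in Z)"
  using fn_upper[OF assms] by (intro bdd_aboveI2[where M="fnorm_on Z f"]) (meson abs_ge_self order_trans)

lemma sup_eq:
  assumes Z: "subspace Z" and f: "dual_on Z f"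
  shows "Sup (f ` unit_ball_in Z) = fnorm_on Z f"
proof (rule antisym)
  show "Sup (f ` unit_ball_in Z) \<le> fnorm_on Z f"
    using fn_upper[OF f] zero_ball[OF Z] by (intro cSup_least) (auto intro: order_trans[OF abs_ge_self])
next
  have "\<bar>f x\<bar> \<le> Sup (f ` unit_ball_in Z)" if x: "x \<in> unit_ball_in Z" for x
  proof (cases "f x \<ge> 0")
    case True
    then show ?thesis using x bdd_f[OF f] by (auto intro: cSup_upper)
  next
    case False
    have "-x \<in> unit_ball_in Z" using neg_ball[OF Z x] .
    moreover have "f (-x) = \<bar>f x\<bar>" using dual_on_neg[OF f] x False unfolding unit_ball_in_def by auto
    ultimately show ?thesis using bdd_f[OF f] by (metis cSup_upper image_eqI)
  qed
  then show "fnorm_on Z f \<le> Sup (f ` unit_ball_in Z)"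
    unfolding fnorm_on_def using zero_ball[OF Z] by (intro cSup_least) auto
qed

lemma dual_on_UNIV: "dual_on UNIV f \<Longrightarrow> dual_on Z f"
  unfolding dual_on_def by blast

lemma restrict_slice:
  fixes f :: "'a::real_normed_vector \<Rightarrow> real"
  assumes Z: "subspace Z" and f: "dual_on UNIV f" and f1: "fnorm_on UNIV f = 1"
    and a: "\<alpha> > 0" and p: "p \<in> Z" "norm p \<le> 1" and fp: "f p > 1 - \<alpha>" "f p > 1/2"
  shows "\<exists>S'. is_ball_slice Z S' \<and> S' \<subseteq> slice (unit_ball_in UNIV) f \<alpha>"
proof -
  have fZ: "dual_on Z f" using dual_on_UNIV[OF f] .
  define t where "t = fnorm_on Z f"
  have pB: "p \<in> unit_ball_in Z" using p unfolding unit_ball_in_def by auto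
  have "f p \<le> t" using fn_upper[OF fZ pB] unfolding t_def by linarith
  then have t0: "t > 1/2" and t1: "t > 1 - \<alpha>" using fp by auto
  define h where "h = (\<lambda>x. f x / t)"
  have hZ: "dual_on Z h"
  proof -
    obtain K where K: "\<forall>x\<in>Z. \<bar>f x\<bar> \<le> K * norm x" using fZ unfolding dual_on_def by blast
    have "\<forall>x\<in>Z. \<bar>h x\<bar> \<le> (K / t) * norm x"
      using K t0 by (auto simp: h_def divide_right_mono)
    then have "\<exists>K. \<forall>x\<in>Z. \<bar>h x\<bar> \<le> K * norm x" by blast
    moreover have "\<forall>x\<in>Z. \<forall>y\<in>Z. h (x + y) = h x + h y" "\<forall>c. \<forall>x\<in>Z. h (c *\<^sub>R x) = c * h x"
      using fZ unfolding dual_on_def h_def by (auto simp: add_divide_distrib)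
    ultimately show ?thesis unfolding dual_on_def by blast
  qed
  have h1: "fnorm_on Z h = 1"
  proof (rule antisym)
    have "\<bar>h x\<bar> \<le> 1" if "x \<in> unit_ball_in Z" for x
      using fn_upper[OF fZ that] t0 unfolding h_def t_def by auto
    then show "fnorm_on Z h \<le> 1" unfolding fnorm_on_def
      using zero_ball[OF Z] by (intro cSup_least) auto
  next
    show "1 \<le> fnorm_on Z h"
    proof (rule ccontr)
      assume "\<not> 1 \<le> fnorm_on Z h"
      then have s: "fnorm_on Z h < 1" by simp
      have "\<bar>f x\<bar> \<le> fnorm_on Z h * t" if "x \<in> unit_ball_in Z" for x
        using fn_upper[OF hZ that] t0 unfolding h_def by (simp add: field_simps)
      then have "t \<le> fnorm_on Z h * t" unfolding t_def fnorm_on_def[of Z f]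
        using zero_ball[OF Z] by (intro cSup_least) auto
      then show False using s t0 by (simp add: mult_le_cancel_right2)
    qed
  qed
  define \<beta> where "\<beta> = (t - 1 + \<alpha>) / t"
  have b0: "\<beta> > 0" using t0 t1 unfolding \<beta>_def by auto
  have sh: "Sup (h ` unit_ball_in Z) = 1" using sup_eq[OF Z hZ] h1 by simp
  have sf: "Sup (f ` unit_ball_in UNIV) = 1" using sup_eq[OF subspace_UNIV f] f1 by simp
  have "slice (unit_ball_in Z) h \<beta> \<subseteq> slice (unit_ball_in UNIV) f \<alpha>"
  proof
    fix z assume "z \<in> slice (unit_ball_in Z) h \<beta>"
    then have z: "z \<in> unit_ball_in Z" "h z > 1 - \<beta>" unfolding slice_def sh by auto
    have "1 - \<beta> = (1 - \<alpha>) / t" using t0 unfolding \<beta>_def by (simp add: field_simps)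
    then have "f z > 1 - \<alpha>" using z(2) t0 unfolding h_def by (simp add: divide_less_cancel)
    then show "z \<in> slice (unit_ball_in UNIV) f \<alpha>" using z(1)
      unfolding slice_def sf by (auto simp: unit_ball_in_def)
  qed
  moreover have "is_ball_slice Z (slice (unit_ball_in Z) h \<beta>)"
    unfolding is_ball_slice_def using hZ h1 b0 by blast
  ultimately show ?thesis by blast
qed

lemma comb_bounded:
  fixes S :: "nat \<Rightarrow> 'a::real_normed_vector set"
  assumes "\<forall>i<k. S i \<subseteq> unit_ball_in UNIV" "\<forall>i<k. w i > 0" "(\<Sum>i<k. w i) = 1"
  shows "bounded {\<Sum>i<k. w i *\<^sub>R x i | x. \<forall>i<k. x i \<in> S i}"
proof -
  have "norm (\<Sum>i<k. w i *\<^sub>R x i) \<le> 1" if x: "\<forall>i<k. x i \<in> S i" for x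
  proof -
    have "norm (\<Sum>i<k. w i *\<^sub>R x i) \<le> (\<Sum>i<k. norm (w i *\<^sub>R x i))" by (rule norm_sum)
    also have "\<dots> \<le> (\<Sum>i<k. w i)"
    proof (rule sum_mono)
      fix i assume "i \<in> {..<k}"
      then have "norm (x i) \<le> 1" "w i > 0" using x assms(1,2) unfolding unit_ball_in_def by auto
      then show "norm (w i *\<^sub>R x i) \<le> w i" by (simp add: mult_left_le)
    qed
    finally show ?thesis using assms(3) by simp
  qed
  then show ?thesis unfolding bounded_iff by blast
qed

theorem mainTheorem1:
  fixes Y :: "'a::banach set"
  assumes "BSCSP_on (UNIV :: 'a set)"
    and "subspace Y" and "closed Y" and "separable_space (top_of_set Y)"
  shows "\<exists>Z. subspace Z \<and> closed Z \<and> separable_space (top_of_set Z) \<and> Y \<subseteq> Z \<and> BSCSP_on Z"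
proof -
  let ?comb = "\<lambda>k (S::nat \<Rightarrow> 'a set) (w::nat \<Rightarrow> real). {\<Sum>i<k. w i *\<^sub>R x i | x. \<forall>i<k. x i \<in> S i}"
  have "\<forall>n. \<exists>k S w. (\<forall>i<k. is_ball_slice UNIV (S i)) \<and> (\<forall>i<k. w i > 0) \<and> (\<Sum>i<k. w i) = 1 \<and>
        diameter (?comb k S w) < 1 / real (Suc n)"
    using assms(1) unfolding BSCSP_on_def by auto
  then obtain K SS W where KSW: "\<And>n. (\<forall>i<K n. is_ball_slice UNIV (SS n i)) \<and> (\<forall>i<K n. W n i > 0) \<and>
        (\<Sum>i<K n. W n i) = 1 \<and> diameter (?comb (K n) (SS n) (W n)) < 1 / real (Suc n)"
    unfolding choice_iff by blast
  have "\<forall>n i. \<exists>F A. i < K n \<longrightarrow> dual_on UNIV F \<and> fnorm_on UNIV F = 1 \<and> A > 0 \<and>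
      SS n i = slice (unit_ball_in UNIV) F A"
    using KSW unfolding is_ball_slice_def by metis
  then obtain F A where FA: "\<And>n i. i < K n \<Longrightarrow> dual_on UNIV (F n i) \<and> fnorm_on UNIV (F n i) = 1 \<and> A n i > 0 \<and>
      SS n i = slice (unit_ball_in UNIV) (F n i) (A n i)"
    unfolding choice_iff by blast
  have "\<forall>n i. \<exists>p. i < K n \<longrightarrow> norm p \<le> 1 \<and> F n i p > 1 - A n i \<and> F n i p > 1/2"
  proof (intro allI)
    fix n i
    show "\<exists>p. i < K n \<longrightarrow> norm p \<le> 1 \<and> F n i p > 1 - A n i \<and> F n i p > 1/2"
    proof (cases "i < K n")
      case True
      note fa = FA[OF True]
      have "Sup (F n i ` unit_ball_in UNIV) = 1" using sup_eq[OF subspace_UNIV, of "F n i"] fa by simp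
      then have "max (1 - A n i) (1/2) < Sup (F n i ` unit_ball_in UNIV)" using fa by auto
      then obtain y where "y \<in> F n i ` unit_ball_in UNIV" "max (1 - A n i) (1/2) < y"
        using less_cSupE zero_ball[OF subspace_UNIV] by blast
      then show ?thesis by (auto simp: unit_ball_in_def)
    qed auto
  qed
  then obtain P where P: "\<And>n i. i < K n \<Longrightarrow> norm (P n i) \<le> 1 \<and> F n i (P n i) > 1 - A n i \<and> F n i (P n i) > 1/2"
    unfolding choice_iff by blast
  obtain CY where CY: "countable CY" "CY \<subseteq> Y" "Y \<subseteq> closure CY"
    using assms(4) unfolding separable_space_def
    by (auto simp: closure_of_subtopology Int_absorb2)
  define D where "D = (\<lambda>(n,i). P n i) ` UNIV"
  define Z where "Z = closure (span (CY \<union> D))"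
  have Zsub: "subspace Z" unfolding Z_def
    by (rule closure_subspaceI) (auto simp: span_zero span_add span_scale)
  have spanZ: "span (CY \<union> D) \<subseteq> Z" unfolding Z_def by (rule closure_subset)
  have "countable (CY \<union> D)" using CY(1) unfolding D_def by simp
  then have sep: "separable_space (top_of_set Z)" unfolding Z_def by (rule separable_closure_span)
  have YZ: "Y \<subseteq> Z"
  proof -
    have "closure CY \<subseteq> Z" unfolding Z_def by (intro closure_mono) (auto intro: span_base)
    then show ?thesis using CY(3) by blast
  qed
  have "BSCSP_on Z" unfolding BSCSP_on_def
  proof (intro allI impI)
    fix \<epsilon> :: real assume e: "\<epsilon> > 0"
    obtain m :: nat where m: "m > 0" "inverse (real m) < \<epsilon>" using ex_inverse_of_nat_less[OF e] by blast
    define n where "n = m - 1"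
    have ne: "1 / real (Suc n) < \<epsilon>" using m unfolding n_def by (simp add: divide_inverse)
    have "\<forall>i. \<exists>S'. i < K n \<longrightarrow> is_ball_slice Z S' \<and> S' \<subseteq> SS n i"
    proof (intro allI)
      fix i show "\<exists>S'. i < K n \<longrightarrow> is_ball_slice Z S' \<and> S' \<subseteq> SS n i"
      proof (cases "i < K n")
        case True
        have pZ: "P n i \<in> Z" using spanZ unfolding D_def by (auto intro: span_base)
        show ?thesis using restrict_slice[OF Zsub _ _ _ pZ] FA[OF True] P[OF True] by metis
      qed auto
    qed
    then obtain T where T: "\<And>i. i < K n \<Longrightarrow> is_ball_slice Z (T i) \<and> T i \<subseteq> SS n i"
      unfolding choice_iff by blast
    have sub: "?comb (K n) T (W n) \<subseteq> ?comb (K n) (SS n) (W n)" using T by blast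
    have "\<forall>i<K n. SS n i \<subseteq> unit_ball_in UNIV" using FA unfolding slice_def by auto
    then have bd: "bounded (?comb (K n) (SS n) (W n))" using comb_bounded KSW by blast
    have "diameter (?comb (K n) T (W n)) < \<epsilon>"
      using diameter_subset[OF sub bd] KSW[of n] ne by linarith
    then show "\<exists>(k::nat) (S::nat \<Rightarrow> 'a set) (w::nat \<Rightarrow> real).
        (\<forall>i<k. is_ball_slice Z (S i)) \<and> (\<forall>i<k. w i > 0) \<and> (\<Sum>i<k. w i) = 1 \<and>
        diameter {\<Sum>i<k. w i *\<^sub>R x i | x. \<forall>i<k. x i \<in> S i} < \<epsilon>"
      using T KSW[of n] by blast
  qed
  then show ?thesis using Zsub sep YZ unfolding Z_def by (intro exI[of _ Z]) (auto simp: Z_def)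
qed

end
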